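(* Fix $\epsilon\in(0,1)$ and let $\theta(n)=\epsilon$ for all $n$. Then for all sufficiently large $n$ and every $\rho\in[0,c]$, the quantities $$T_i=\frac{e^{\rho i}\,b^{\binom i2}\,k^2\,a!^2}{n^i\,i!\,(a-i)!^2}$$ satisfy $T_i\le n^{-c_5}$ for all $3\le i\le\lceil n/k\rceil-1$, and $T_i\le n^{1-c_5}$ for $i\in\{2,\lceil n/k\rceil\}$.
   Context: Let $p\in(0,1)$ be constant, $q=1-p$, $b=1/q$, $\log$ natural logarithm, $\gamma=2\log_b n-2\log_b\log_b n-2\log_b 2$, $\Delta=\gamma-\lfloor\gamma\rfloor$, $a=\lfloor\gamma\rfloor+1$, and $x_0=x_0(n)$ the smallest nonnegative $x$ with $(1-\Delta+x)\log_b(1-\Delta+x)+(1-\Delta)(\Delta-x)/2\le0$. Let $k=\lceil n/(\gamma-x_0-\epsilon)\rceil$. Let $c_2=-\frac{(1-\epsilon)\log(1-\epsilon)}{\epsilon}\in(0,1)$, $c=\frac{1-c_2}{2}\in(0,\frac12)$, and $c_5=\min\{\frac1{10},\frac{c}{2\log b},\frac{1-c}{2\log b}\}$. *)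

theory Defs
  imports "HOL-Analysis.Analysis"
begin

text \<open>Parameters: p in (0,1) (edge probability), eps in (0,1). q = 1 - p, b = 1/q.\<close>

definition bb :: "real \<Rightarrow> real" where
  "bb p = 1 / (1 - p)"

definition gam :: "real \<Rightarrow> nat \<Rightarrow> real" where
  "gam p n = 2 * log (bb p) (real n) - 2 * log (bb p) (log (bb p) (real n))
             - 2 * log (bb p) 2"

definition Dlt :: "real \<Rightarrow> nat \<Rightarrow> real" where
  "Dlt p n = gam p n - of_int \<lfloor>gam p n\<rfloor>"

definition aa :: "real \<Rightarrow> nat \<Rightarrow> nat" where
  "aa p n = nat (\<lfloor>gam p n\<rfloor> + 1)"

text \<open>x0(n): smallest nonnegative x with the stated inequality (the set is closed and contains Delta).\<close>
definition x0 :: "real \<Rightarrow> nat \<Rightarrow> real" where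
  "x0 p n = Inf {x. 0 \<le> x \<and>
      (1 - Dlt p n + x) * log (bb p) (1 - Dlt p n + x)
        + (1 - Dlt p n) * (Dlt p n - x) / 2 \<le> 0}"

definition kk :: "real \<Rightarrow> real \<Rightarrow> nat \<Rightarrow> int" where
  "kk p eps n = \<lceil>real n / (gam p n - x0 p n - eps)\<rceil>"

definition c2 :: "real \<Rightarrow> real" where
  "c2 eps = - ((1 - eps) * ln (1 - eps)) / eps"

definition cc :: "real \<Rightarrow> real" where
  "cc eps = (1 - c2 eps) / 2"

definition c5 :: "real \<Rightarrow> real \<Rightarrow> real" where
  "c5 p eps = min (1/10) (min (cc eps / (2 * ln (bb p))) ((1 - cc eps) / (2 * ln (bb p))))"

definition TT :: "real \<Rightarrow> real \<Rightarrow> nat \<Rightarrow> real \<Rightarrow> nat \<Rightarrow> real" where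
  "TT p eps n \<rho> i =
     exp (\<rho> * real i) * bb p ^ (i choose 2) * (real_of_int (kk p eps n))\<^sup>2 * (fact (aa p n))\<^sup>2
     / (real n ^ i * fact i * (fact (aa p n - i))\<^sup>2)"

end

theory Submission
  imports Defs
begin



lemma fact_le_pow_aux:
  assumes "i \<le> a" shows "(fact a :: real) \<le> fact i * real a ^ (a - i)"
  using assms
proof (induction a)
  case 0 thus ?case by simp
next
  case (Suc a)
  show ?case
  proof (cases "i = Suc a")
    case True thus ?thesis by simp
  next
    case False
    hence ia: "i \<le> a" using Suc.prems by simp
    have "(fact (Suc a) :: real) = real (Suc a) * fact a" by simp
    also have "\<dots> \<le> real (Suc a) * (fact i * real a ^ (a - i))"
      using Suc.IH[OF ia] by (intro mult_left_mono) auto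
    also have "\<dots> \<le> real (Suc a) * (fact i * real (Suc a) ^ (a - i))"
      by (intro mult_left_mono power_mono) auto
    also have "\<dots> = fact i * real (Suc a) ^ (Suc a - i)"
      using ia by (simp add: Suc_diff_le)
    finally show ?thesis .
  qed
qed

lemma fact_exp_bound:
  assumes "n \<ge> 1" shows "(fact n :: real) \<le> exp 1 * real n ^ (n+1) / exp (real n)"
  using assms
proof (induction n rule: nat_induct_at_least)
  case base thus ?case by simp
next
  case (Suc n)
  have n: "real n \<ge> 1" using Suc.hyps by simp
  have l: "ln (real n / (real n + 1)) \<le> real n / (real n + 1) - 1"
    using n by (intro ln_le_minus_one) auto
  have "ln (real n / (real n + 1)) = - ln ((real n + 1) / real n)"
    using n by (simp add: ln_div)
  moreover have "real n / (real n + 1) - 1 = - 1 / (real n + 1)" using n by (simp add: field_simps)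
  ultimately have "ln ((real n + 1) / real n) \<ge> 1 / (real n + 1)" using l by simp
  hence "(real n + 1) * ln ((real n + 1) / real n) \<ge> 1" using n by (simp add: field_simps)
  hence "exp 1 \<le> exp ((real n + 1) * ln ((real n + 1) / real n))" by simp
  also have "\<dots> = ((real n + 1) / real n) ^ (n+1)"
  proof -
    have "(real n + 1) * ln ((real n + 1) / real n) = ln (((real n + 1) / real n) ^ (n+1))"
      using n by (subst ln_realpow) auto
    thus ?thesis using n by simp
  qed
  finally have e: "exp 1 \<le> ((real n + 1) / real n) ^ (n+1)" .
  hence e2: "exp 1 * real n ^ (n+1) \<le> (real n + 1) ^ (n+1)"
    using n by (simp add: power_divide field_simps)
  have "(fact (Suc n) :: real) = (real n + 1) * fact n" by simp
  also have "\<dots> \<le> (real n + 1) * (exp 1 * real n ^ (n+1) / exp (real n))"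
    using Suc.IH by (intro mult_left_mono) auto
  also have "\<dots> = (real n + 1) * exp 1 * (exp 1 * real n ^ (n+1)) / exp (real n + 1)"
    by (simp add: exp_add field_simps)
  also have "\<dots> \<le> (real n + 1) * exp 1 * (real n + 1) ^ (n+1) / exp (real n + 1)"
    using e2 by (intro divide_right_mono mult_left_mono) auto
  also have "\<dots> = exp 1 * real (Suc n) ^ (Suc n + 1) / exp (real (Suc n))"
    by (simp add: algebra_simps)
  finally show ?case .
qed

lemma ln_fact_le:
  assumes "n \<ge> 1" shows "ln (fact n :: real) \<le> real n * ln (real n) - real n + ln (real n) + 1"
proof -
  have pos: "(fact n :: real) > 0" by simp
  have pos2: "exp 1 * real n ^ (n+1) / exp (real n) > 0" using assms by simp
  have "ln (fact n :: real) \<le> ln (exp 1 * real n ^ (n+1) / exp (real n))"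
    using fact_exp_bound[OF assms] pos pos2 by (subst ln_le_cancel_iff) auto
  also have "\<dots> = 1 + (real n + 1) * ln (real n) - real n"
    using assms by (simp add: ln_div ln_mult ln_realpow algebra_simps)
  finally show ?thesis by (simp add: algebra_simps)
qed


definition Tf :: "real \<Rightarrow> nat \<Rightarrow> real \<Rightarrow> real \<Rightarrow> nat \<Rightarrow> real \<Rightarrow> real" where
 "Tf \<rho> i b k a N = exp (\<rho> * real i) * b ^ (i choose 2) * k\<^sup>2 * (fact a)\<^sup>2 / (N ^ i * fact i * (fact (a - i))\<^sup>2)"

lemma choose2_real: "real (i choose 2) = real i * (real i - 1) / 2"
proof (induction i)
  case 0 thus ?case by simp
next
  case (Suc i)
  have "Suc i choose 2 = i + (i choose 2)"
    by (simp add: numeral_2_eq_2)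
  thus ?case using Suc.IH by (simp add: field_simps)
qed

lemma pow_choose2: assumes "b > 0"
  shows "b ^ (i choose 2) = (b powr ((real i - 1)/2)) ^ i"
proof -
  have "b ^ (i choose 2) = b powr (real (i choose 2))" using assms by (simp add: powr_realpow)
  also have "\<dots> = b powr (((real i - 1)/2) * real i)" by (simp add: choose2_real field_simps)
  also have "\<dots> = (b powr ((real i - 1)/2)) powr (real i)" by (simp add: powr_powr)
  also have "\<dots> = (b powr ((real i - 1)/2)) ^ i" using assms by (simp add: powr_realpow)
  finally show ?thesis .
qed

lemma aux_ratio:
  fixes R G N fI sv Ni E ee C bi K F2 :: real
  assumes "R \<noteq> 0" "G \<noteq> 0" "N \<noteq> 0" "fI \<noteq> 0" "sv \<noteq> 0" "Ni \<noteq> 0"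
  shows "E * ee * (C * bi) * K * F2 / ((Ni * N) * (sv * fI) * G^2) = E * C * K * F2 / (Ni * fI * (R * G)^2) * (ee * bi * R^2 / (N * sv))"
  using assms by (simp add: field_simps power2_eq_square)

lemma Tf_ratio:
  assumes "i < a" "N > 0" "b > 0"
  shows "Tf \<rho> (Suc i) b k a N = Tf \<rho> i b k a N * (exp \<rho> * b ^ i * (real (a - i))\<^sup>2 / (N * (real i + 1)))"
proof -
  have c: "Suc i choose 2 = (i choose 2) + i" by (simp add: numeral_2_eq_2)
  have f: "a - i = Suc (a - Suc i)" using assms by simp
  have fa: "(fact (a - i) :: real) = real (a - i) * fact (a - Suc i)"
  proof -
    have "(fact (a - i) :: real) = fact (Suc (a - Suc i))" by (simp only: f)
    also have "\<dots> = real (Suc (a - Suc i)) * fact (a - Suc i)" by (simp only: fact_Suc of_nat_mult)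
    finally show ?thesis by (simp only: f[symmetric])
  qed
  have ai: "real (a - i) \<noteq> 0" using assms by simp
  have e1: "exp (\<rho> * real (Suc i)) = exp (\<rho> * real i) * exp \<rho>" by (simp add: exp_add[symmetric] algebra_simps)
  have b1: "b ^ (Suc i choose 2) = b ^ (i choose 2) * b ^ i" by (simp only: c power_add)
  have f1: "(fact (Suc i) :: real) = (real i + 1) * fact i" by simp
  have n1: "N ^ Suc i = N ^ i * N" by simp
  show ?thesis unfolding Tf_def e1 b1 f1 n1 fa
    by (rule aux_ratio) (use assms ai in auto)
qed

lemma Tf_gen:
  assumes b: "b > 0" and N: "N > 0" and r: "0 \<le> \<rho>" "\<rho> \<le> c" and k: "k\<^sup>2 \<le> N\<^sup>2" and ia: "i \<le> a"
  shows "Tf \<rho> i b k a N \<le> N\<^sup>2 * (exp c * (real a)\<^sup>2 * b powr ((real i - 1)/2) / N) ^ i"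
proof -
  define B where "B = b powr ((real i - 1)/2)"
  have B: "B \<ge> 0" unfolding B_def by simp
  have fa: "(fact a :: real) \<le> fact (a - i) * real a ^ i"
    using fact_le_pow_aux[of "a - i" a] ia by simp
  have fpos: "(fact (a - i) :: real) > 0" by simp
  have q: "(fact a)\<^sup>2 / (fact (a - i))\<^sup>2 \<le> ((real a)^i)\<^sup>2"
  proof -
    have "fact a / fact (a - i) \<le> (real a)^i" using fa fpos by (simp add: divide_le_eq mult.commute)
    hence "(fact a / fact (a - i))\<^sup>2 \<le> ((real a)^i)\<^sup>2"
      by (intro power_mono) auto
    thus ?thesis by (simp add: power_divide)
  qed
  have e: "exp (\<rho> * real i) \<le> exp c ^ i"
    using r by (simp add: exp_of_nat_mult[symmetric] mult.commute mult_right_mono)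
  have "Tf \<rho> i b k a N = exp (\<rho> * real i) * B ^ i * k\<^sup>2 * ((fact a)\<^sup>2 / (fact (a - i))\<^sup>2) / (N ^ i * fact i)"
    unfolding Tf_def B_def pow_choose2[OF b] by (simp add: field_simps)
  also have "\<dots> \<le> exp (\<rho> * real i) * B ^ i * k\<^sup>2 * ((fact a)\<^sup>2 / (fact (a - i))\<^sup>2) / (N ^ i)"
    using N B by (intro divide_left_mono) (auto simp: fact_ge_1 intro!: mult_nonneg_nonneg)
  also have "\<dots> \<le> exp c ^ i * B ^ i * N\<^sup>2 * ((real a)^i)\<^sup>2 / (N ^ i)"
    using N B e k q by (intro divide_right_mono mult_mono) (auto intro!: mult_nonneg_nonneg)
  also have "\<dots> = N\<^sup>2 * (exp c * (real a)\<^sup>2 * B / N) ^ i"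
    by (simp add: power_mult_distrib power_divide field_simps power_mult[symmetric] mult.commute)
  finally show ?thesis unfolding B_def .
qed

lemma Tf_main:
  assumes b: "b > 0" and N: "N > 0" and r: "0 \<le> \<rho>" and k: "k\<^sup>2 \<le> N\<^sup>2" and ia: "i \<le> a" and a1: "1 \<le> a"
  shows "Tf \<rho> i b k a N \<le> exp (\<rho> * real i + ln b * (real i * (real i - 1) / 2) + 2 * ln N
      + ln (fact a) + real (a - i) * ln (real a) - real i * ln N)"
proof -
  have fa: "(fact a :: real) \<le> fact i * real a ^ (a - i)" using fact_le_pow_aux[OF ia] .
  have fpos: "(fact i :: real) > 0" "(fact (a-i) :: real) \<ge> 1" by (auto simp: fact_ge_1)
  have q: "(fact a)\<^sup>2 / (fact i * (fact (a - i))\<^sup>2) \<le> fact a * real a ^ (a - i)"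
  proof -
    have "fact i \<le> fact i * (fact (a - i) :: real)\<^sup>2"
      using fpos by (simp add: mult_le_cancel_left1 one_le_power)
    hence "(fact a)\<^sup>2 / (fact i * (fact (a - i))\<^sup>2) \<le> (fact a :: real)\<^sup>2 / fact i"
      by (rule divide_left_mono) (auto intro!: mult_pos_pos)
    also have "\<dots> = fact a * (fact a / fact i)" by (simp add: power2_eq_square)
    also have "\<dots> \<le> fact a * real a ^ (a - i)"
      using fa fpos by (intro mult_left_mono) (auto simp: divide_le_eq mult.commute)
    finally show ?thesis .
  qed
  have "Tf \<rho> i b k a N = exp (\<rho> * real i) * b ^ (i choose 2) * k\<^sup>2 * ((fact a)\<^sup>2 / (fact i * (fact (a - i))\<^sup>2)) / N ^ i"
    unfolding Tf_def by (simp add: field_simps)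
  also have "\<dots> \<le> exp (\<rho> * real i) * b ^ (i choose 2) * N\<^sup>2 * (fact a * real a ^ (a - i)) / N ^ i"
    using N k q b by (intro divide_right_mono mult_mono) auto
  also have "\<dots> = exp (\<rho> * real i + ln b * (real i * (real i - 1) / 2) + 2 * ln N
      + ln (fact a) + real (a - i) * ln (real a) - real i * ln N)"
  proof -
    have "b ^ (i choose 2) = exp (ln b * (real i * (real i - 1) / 2))"
      using b by (simp add: powr_realpow[symmetric] powr_def choose2_real mult.commute)
    moreover have "N\<^sup>2 = exp (2 * ln N)"
    proof -
      have "exp (2 * ln N) = exp (real 2 * ln N)" by simp
      also have "\<dots> = exp (ln N) ^ 2" by (rule exp_of_nat_mult)
      finally show ?thesis using N by simp
    qed
    moreover have "(fact a :: real) = exp (ln (fact a))" by simp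
    moreover have "real a ^ (a - i) = exp (real (a - i) * ln (real a))"
      using a1 by (subst exp_of_nat_mult) simp
    moreover have "N ^ i = exp (real i * ln N)" using N by (subst exp_of_nat_mult) simp
    ultimately show ?thesis by (simp add: exp_add exp_diff)
  qed
  finally show ?thesis .
qed

lemma psi_mono:
  fixes u v :: real
  assumes "0 < u" "u \<le> v" "v < 1"
  shows "v * ln v / (1 - v) \<le> u * ln u / (1 - u)"
proof (rule DERIV_nonpos_imp_nonincreasing[OF assms(2), of "\<lambda>w. w * ln w / (1 - w)"])
  fix w assume w: "u \<le> w" "w \<le> v"
  hence w0: "0 < w" "w < 1" using assms by auto
  have "DERIV (\<lambda>w. w * ln w / (1 - w)) w :> ((ln w + 1) * (1 - w) + w * ln w) / (1 - w)^2"
    using w0 by (auto intro!: derivative_eq_intros simp: field_simps power2_eq_square)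
  moreover have "((ln w + 1) * (1 - w) + w * ln w) / (1 - w)^2 \<le> 0"
  proof -
    have "(ln w + 1) * (1 - w) + w * ln w = ln w + 1 - w" by (simp add: algebra_simps)
    also have "\<dots> \<le> 0" using ln_le_minus_one[OF w0(1)] by simp
    finally show ?thesis by (simp add: divide_nonpos_nonneg)
  qed
  ultimately show "\<exists>y. DERIV (\<lambda>w. w * ln w / (1 - w)) w :> y \<and> y \<le> 0" by blast
qed

lemma ln_strict:
  fixes w :: real assumes "w > 1" shows "ln w < w - 1"
proof -
  define q where "q = sqrt w"
  have q1: "q > 1" using assms unfolding q_def by auto
  have q2: "q * q = w" using assms unfolding q_def by auto
  have "ln w = 2 * ln q" using q1 q2 ln_mult[of q q] by simp
  also have "\<dots> \<le> 2 * (q - 1)" using ln_le_minus_one[of q] q1 by simp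
  also have "\<dots> < q * q - 1"
  proof -
    have "(q - 1) * (q - 1) > 0" using q1 by simp
    thus ?thesis by (simp add: algebra_simps)
  qed
  finally show ?thesis using q2 by simp
qed



lemma ev_poly_exp:
  fixes A B r :: real
  assumes r: "r > 0"
  shows "eventually (\<lambda>x::real. A * (B*x)^q \<le> exp (r*x)) at_top"
proof -
  define C where "C = \<bar>A\<bar> * \<bar>B\<bar>^q / r^q + 1"
  have C: "C > 0" unfolding C_def using r by (smt (verit) divide_nonneg_pos zero_le_power abs_ge_zero mult_nonneg_nonneg zero_less_power)
  have lim: "((\<lambda>x. (r*x) ^ q / exp (r*x)) \<longlongrightarrow> (0::real)) at_top"
    by (rule filterlim_compose[OF tendsto_power_div_exp_0])
       (use r in \<open>intro filterlim_tendsto_pos_mult_at_top tendsto_const filterlim_ident\<close>; auto)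
  have "eventually (\<lambda>x. (r*x) ^ q / exp (r*x) < 1/C) at_top"
    using order_tendstoD(2)[OF lim] C by simp
  moreover have "eventually (\<lambda>x::real. x \<ge> 0) at_top" by (rule eventually_ge_at_top)
  ultimately show ?thesis
  proof eventually_elim
    case (elim x)
    have e: "exp (r*x) > 0" by simp
    have "(r*x)^q < exp (r*x) / C" using elim(1) e C by (simp add: field_simps)
    hence "(r*x)^q * C \<le> exp (r*x)" using C by (simp add: field_simps)
    hence h: "r^q * x^q * C \<le> exp (r*x)" by (simp add: power_mult_distrib)
    have "A * (B*x)^q \<le> \<bar>A\<bar> * \<bar>B\<bar>^q * x^q"
    proof -
      have "A * (B*x)^q \<le> \<bar>A * (B*x)^q\<bar>" by simp
      also have "\<dots> = \<bar>A\<bar> * \<bar>B\<bar>^q * x^q" using elim(2)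
        by (simp add: abs_mult power_abs power_mult_distrib)
      finally show ?thesis .
    qed
    also have "\<dots> \<le> r^q * x^q * C"
    proof -
      have "\<bar>A\<bar> * \<bar>B\<bar>^q = r^q * (C - 1)" unfolding C_def using r by simp
      hence "\<bar>A\<bar> * \<bar>B\<bar>^q * x^q = r^q * x^q * (C - 1)" by (metis mult.commute mult.left_commute)
      also have "\<dots> \<le> r^q * x^q * C" using r elim(2) by (intro mult_left_mono) auto
      finally show ?thesis .
    qed
    finally show ?case using h by linarith
  qed
qed

lemma key_alg:
 fixes g l D m r t x a i :: real
 assumes t: "t>0" and x: "x = (t*g+2*l)/2" and a: "a = g+1-D" and i: "i = a - m"
   and D: "0\<le>D" "D<1" and m: "0\<le>m" "m\<le>4" and r: "0\<le>r" "r\<le>1/2" and l: "l \<ge> 0"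
 shows "r*i + t*(i*(i-1)/2) + 2*x + (a+m+1)*l - a + 1 - i*x
   \<le> x*(1-(g-i)) - 2*x*(1-r)/t + (l*(14+4/t) + 2 + 10*t)"
proof -
  define y where "y = D + m - 1"
  have iy: "i = g - y" using a i y_def by simp
  have eq: "x*(1-(g-i)) - 2*x*(1-r)/t + (l*(14+4/t) + 2 + 10*t) -
     (r*i + t*(i*(i-1)/2) + 2*x + (a+m+1)*l - a + 1 - i*x)
   = l * ((1-y) - 2*(1-r)/t + 14 + 4/t - 2*m - 3) + (2 + 10*t + r*y - y*t*(y+1)/2 - D)"
    unfolding iy x a y_def using t by (simp add: field_simps)
  have A: "(1-y) - 2*(1-r)/t + 14 + 4/t - 2*m - 3 \<ge> 0"
  proof -
    have "2*(1-r)/t \<le> 4/t" using r t by (simp add: divide_right_mono)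
    thus ?thesis unfolding y_def using D m by linarith
  qed
  have y1: "y + 1 \<ge> 0" "y \<le> 4" unfolding y_def using D m by auto
  have B1: "y*(y+1) \<le> 4*(y+1)" using y1 by (intro mult_right_mono) auto
  have "y*(y+1)*t \<le> 4*(y+1)*t" by (rule mult_right_mono[OF B1]) (use t in simp)
  also have "\<dots> \<le> 20 * t" using y1 t by (intro mult_right_mono) auto
  finally have "y*t*(y+1)/2 \<le> 10 * t" by (simp add: algebra_simps)
  moreover have "r*y \<ge> -r"
  proof -
    have "r*(y+1) \<ge> 0" using r y1 by simp
    thus ?thesis by (simp add: algebra_simps)
  qed
  ultimately have B: "2 + 10*t + r*y - y*t*(y+1)/2 - D \<ge> 0" using D r by linarith
  have "l * ((1-y) - 2*(1-r)/t + 14 + 4/t - 2*m - 3) \<ge> 0" using A l by simp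
  thus ?thesis using eq B by linarith
qed





lemma cc_facts:
  assumes "0 < eps" "eps < 1"
  shows "0 < cc eps" "cc eps < 1/2" "c2 eps = 1 - 2 * cc eps"
proof -
  have l: "ln (1 - eps) < 0" using assms by simp
  have "(1-eps)*ln(1-eps) < 0" using l assms by (simp add: mult_pos_neg)
  hence "c2 eps > 0" unfolding c2_def using assms by (simp add: divide_neg_pos)
  moreover have "c2 eps < 1"
  proof -
    have w: "1 / (1 - eps) > 1" using assms by simp
    have "ln (1 / (1 - eps)) < 1 / (1 - eps) - 1" by (rule ln_strict[OF w])
    hence "- ln (1 - eps) < eps / (1 - eps)" using assms by (simp add: ln_div field_simps)
    hence "- ln (1 - eps) * (1 - eps) < eps" using assms by (simp add: field_simps)
    thus ?thesis unfolding c2_def using assms by (simp add: field_simps)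
  qed
  ultimately show "0 < cc eps" "cc eps < 1/2" "c2 eps = 1 - 2 * cc eps" unfolding cc_def by (auto simp: field_simps)
qed

lemma bb_facts: assumes "0 < p" "p < 1" shows "bb p > 1" "ln (bb p) > 0"
  using assms unfolding bb_def by auto

locale pn =
  fixes p eps :: real and n :: nat and t x c :: real
  assumes p: "0<p" "p<1" and e: "0<eps" "eps<1" and n: "n>0"
  and t_def: "t = ln (bb p)" and x_def: "x = ln (real n)" and c_def: "c = cc eps"
  and H1: "1 \<le> 2*x/t" and H1b: "t \<le> 2*ln(2*x/t)" and H2: "ln(2*x/t) \<le> x/2" and H3: "20 \<le> x/t"
  and H4: "(2*x/t)^2 < real n"
  and H5: "exp(3*c)*(2*x/t)^6 \<le> exp(3/20*x)"
  and H6: "exp c*(2*x/t)^2 \<le> exp(3/4*x)"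
  and H7: "exp c*(2*x/t)^3 \<le> exp(1/4*x)"
  and H8: "exp(2*c)*(2*x/t)^4 * bb p \<le> exp(9/10*x)"
  and H9: "ln(2*x/t)*(14+4/t) + 2 + 10*t \<le> c/t * x"
begin

lemma t_pos: "t > 0" using bb_facts[OF p] t_def by simp
lemma b_gt1: "bb p > 1" using bb_facts[OF p] by simp
lemma c_facts: "0 < c" "c < 1/2" "c2 eps = 1 - 2*c" using cc_facts[OF e] c_def by auto
lemma x_pos: "x > 0" using H3 t_pos by (smt (verit) divide_nonpos_pos)
lemma n_exp: "real n = exp x" using n x_def by simp

definition lam where "lam = ln (2*x/t)"
lemma lam_nonneg: "lam \<ge> 0" unfolding lam_def using H1 by simp

lemma log_b: "log (bb p) z = ln z / t" unfolding log_def t_def ..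

lemma gam_eq: "gam p n = (2*x - 2*lam)/t"
proof -
  have xt: "x / t > 0" using x_pos t_pos by simp
  have "2*x/t = 2*(x/t)" by simp
  hence "lam = ln 2 + ln (x/t)" unfolding lam_def using xt x_pos t_pos ln_mult[of 2 "x/t"] by simp
  thus ?thesis unfolding gam_def log_b x_def[symmetric] using t_pos by (simp add: field_simps)
qed

lemma gam_bounds: "x/t \<le> gam p n" "gam p n + 1 \<le> 2*x/t" "20 \<le> gam p n"
proof -
  show 1: "x/t \<le> gam p n" unfolding gam_eq using H2 t_pos unfolding lam_def
    by (simp add: field_simps)
  show "gam p n + 1 \<le> 2*x/t" unfolding gam_eq using H1b t_pos unfolding lam_def
    by (simp add: field_simps)
  show "20 \<le> gam p n" using 1 H3 by simp
qed

lemma Dlt_bounds: "0 \<le> Dlt p n" "Dlt p n < 1"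
  unfolding Dlt_def by (auto simp: floor_le_iff) linarith

lemma a_eq: "real (aa p n) = gam p n - Dlt p n + 1"
proof -
  have "\<lfloor>gam p n\<rfloor> \<ge> 0" using gam_bounds(3) by simp
  thus ?thesis unfolding aa_def Dlt_def by simp
qed

lemma a_bounds: "gam p n \<le> real (aa p n)" "real (aa p n) \<le> 2*x/t" "21 \<le> aa p n"
proof -
  show "gam p n \<le> real (aa p n)" using a_eq Dlt_bounds by simp
  show "real (aa p n) \<le> 2*x/t" using a_eq Dlt_bounds gam_bounds by simp
  have "real (aa p n) > 20" using a_eq Dlt_bounds gam_bounds by simp
  thus "21 \<le> aa p n" by simp
qed

definition Sx where "Sx = {z. 0 \<le> z \<and>
      (1 - Dlt p n + z) * log (bb p) (1 - Dlt p n + z)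
        + (1 - Dlt p n) * (Dlt p n - z) / 2 \<le> 0}"

lemma x0_eq: "x0 p n = Inf Sx" unfolding x0_def Sx_def ..

lemma Dlt_in: "Dlt p n \<in> Sx" unfolding Sx_def using Dlt_bounds by simp

lemma x0_bounds: "0 \<le> x0 p n" "x0 p n \<le> Dlt p n"
proof -
  have bdd: "bdd_below Sx" unfolding Sx_def by (rule bdd_belowI[of _ 0]) auto
  show "x0 p n \<le> Dlt p n" unfolding x0_eq by (rule cInf_lower[OF Dlt_in bdd])
  show "0 \<le> x0 p n" unfolding x0_eq using Dlt_in by (intro cInf_greatest) (auto simp: Sx_def)
qed

definition fv where "fv = gam p n - x0 p n - eps"
definition kv where "kv = real_of_int (kk p eps n)"
definition top where "top = \<lceil>real n / kv\<rceil>"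

lemma fv_bounds: "gam p n - 2 < fv" "fv < gam p n" "18 \<le> fv" "fv \<le> 2*x/t"
  unfolding fv_def using x0_bounds Dlt_bounds e gam_bounds by auto

lemma n_ge: "real n \<ge> 2"
proof -
  have "(2*x/t)^2 \<ge> 40^2" using H3 t_pos by (intro power_mono) (auto simp: field_simps)
  thus ?thesis using H4 by simp
qed

lemma kv_bounds: "real n / fv \<le> kv" "kv < real n / fv + 1" "kv > 0" "kv \<le> real n" "kv\<^sup>2 \<le> (real n)\<^sup>2"
proof -
  have kk: "kk p eps n = \<lceil>real n / fv\<rceil>" unfolding kk_def fv_def ..
  show 1: "real n / fv \<le> kv" unfolding kv_def kk by simp
  show 2: "kv < real n / fv + 1" unfolding kv_def kk by linarith
  have f: "fv > 0" using fv_bounds by simp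
  show 3: "kv > 0" using 1 f n by (smt (verit) divide_pos_pos of_nat_0_less_iff)
  have "real n / fv \<le> real n / 2" using fv_bounds n by (intro divide_left_mono) auto
  thus 4: "kv \<le> real n" using 2 n_ge by linarith
  show "kv\<^sup>2 \<le> (real n)\<^sup>2" using 3 4 by (intro power_mono) auto
qed

lemma nk_le: "real n / kv \<le> fv"
proof -
  have f: "fv > 0" using fv_bounds by simp
  have "real n \<le> kv * fv" using kv_bounds(1) f by (simp add: field_simps)
  thus ?thesis using kv_bounds(3) by (simp add: field_simps mult.commute)
qed

lemma nk_gt: "real n / kv > fv - 1"
proof -
  have f: "fv > 0" using fv_bounds by simp
  have ff: "fv * fv < real n"
  proof -
    have "fv * fv \<le> (2*x/t) * (2*x/t)" using fv_bounds f by (intro mult_mono) auto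
    thus ?thesis using H4 by (simp add: power2_eq_square)
  qed
  have "kv < (real n + fv) / fv" using kv_bounds(2) f by (simp add: field_simps)
  hence "real n / kv > real n / ((real n + fv) / fv)" using kv_bounds(3) n f
    by (intro divide_strict_left_mono) (auto intro!: mult_pos_pos divide_pos_pos add_pos_pos)
  also have "real n / ((real n + fv) / fv) = real n * fv / (real n + fv)" by simp
  finally have h: "real n * fv / (real n + fv) < real n / kv" .
  have "fv - 1 \<le> real n * fv / (real n + fv)"
    using ff f n by (simp add: field_simps)
  thus ?thesis using h by linarith
qed

lemma fl_gam: "real_of_int \<lfloor>gam p n\<rfloor> \<le> gam p n" "gam p n < real_of_int \<lfloor>gam p n\<rfloor> + 1"
  by simp_all

lemma int_aa: "int (aa p n) = \<lfloor>gam p n\<rfloor> + 1"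
proof -
  have "\<lfloor>gam p n\<rfloor> \<ge> 0" using gam_bounds(3) by simp
  thus ?thesis unfolding aa_def by simp
qed

lemma top_le: "top \<le> int (aa p n)"
proof -
  have "real n / kv \<le> real_of_int (\<lfloor>gam p n\<rfloor> + 1)" using nk_le fv_bounds(2) fl_gam(2) by (simp only: of_int_add of_int_1)
  hence "top \<le> \<lfloor>gam p n\<rfloor> + 1" unfolding top_def by (rule ceiling_le)
  thus ?thesis using int_aa by simp
qed

lemma top_ge: "top \<ge> int (aa p n) - 3"
proof -
  have "real n / kv > real_of_int (\<lfloor>gam p n\<rfloor> - 3)" using nk_gt fv_bounds(1) fl_gam(1) by (simp only: of_int_diff of_int_numeral)
  moreover have "real n / kv \<le> real_of_int top" unfolding top_def by simp
  ultimately have "real_of_int (\<lfloor>gam p n\<rfloor> - 3) < real_of_int top" by linarith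
  hence "top > \<lfloor>gam p n\<rfloor> - 3" by (simp only: of_int_less_iff)
  thus ?thesis using int_aa by simp
qed

lemma key_ineq:
  assumes "top = int (aa p n)"
  shows "(1 - Dlt p n) * t \<le> 2 * (1 - 2*c)"
proof -
  have "int (aa p n) = \<lfloor>gam p n\<rfloor> + 1" by (rule int_aa)
  hence "\<lfloor>gam p n\<rfloor> + 1 \<le> \<lceil>real n / kv\<rceil>" using assms unfolding top_def by simp
  hence "real_of_int \<lfloor>gam p n\<rfloor> < real n / kv" by (simp add: le_ceiling_iff)
  hence "real_of_int \<lfloor>gam p n\<rfloor> < fv" using nk_le by linarith
  hence x0lt: "x0 p n < Dlt p n - eps" unfolding fv_def Dlt_def by linarith
  have ne: "Sx \<noteq> {}" using Dlt_in by auto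
  obtain s where s: "s \<in> Sx" "s < Dlt p n - eps" using cInf_lessD[OF ne x0lt[unfolded x0_eq]] by auto
  define D where "D = Dlt p n"
  define u where "u = 1 - D + s"
  have s0: "0 \<le> s" and g: "u * log (bb p) u + (1 - D) * (D - s) / 2 \<le> 0"
    using s(1) unfolding Sx_def u_def D_def by auto
  have D: "0 \<le> D" "D < 1" using Dlt_bounds unfolding D_def by auto
  have u: "0 < u" "u \<le> 1 - eps" using s0 D s(2) unfolding u_def D_def by auto
  have "D - s = 1 - u" unfolding u_def by simp
  hence "u * (ln u / t) + (1 - D) * (1 - u) / 2 \<le> 0" using g unfolding log_b by simp
  hence "u * ln u \<le> - (t * (1 - D) * (1 - u) / 2)" using t_pos by (simp add: field_simps)
  hence h1: "u * ln u / (1 - u) \<le> - (t * (1 - D) / 2)" using u e by (simp add: field_simps)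
  have "(1 - eps) * ln (1 - eps) / (1 - (1 - eps)) \<le> u * ln u / (1 - u)"
    by (rule psi_mono) (use u e in auto)
  hence "- c2 eps \<le> u * ln u / (1 - u)" unfolding c2_def by simp
  hence "t * (1 - D) \<le> 2 * c2 eps" using h1 by linarith
  thus ?thesis using c_facts unfolding D_def by (simp add: mult.commute)
qed

lemma c5_le: "c5 p eps \<le> 1/10" "t * c5 p eps \<le> c/2"
proof -
  show "c5 p eps \<le> 1/10" unfolding c5_def by simp
  have "c5 p eps \<le> c / (2*t)" unfolding c5_def c_def t_def by simp
  thus "t * c5 p eps \<le> c/2" using t_pos by (simp add: field_simps)
qed

lemma expo_cond:
  assumes r: "0 \<le> \<rho>" "\<rho> \<le> c"
  shows "x*(1 - (gam p n - real_of_int top)) - 2*x*(1-\<rho>)/t \<le> x*(1 - c5 p eps) - c/t*x"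
proof -
  define y where "y = gam p n - real_of_int top"
  have ty: "t * y \<ge> t * c5 p eps + c - 2*(1-\<rho>)"
  proof (cases "top = int (aa p n)")
    case True
    hence yD: "y = Dlt p n - 1" unfolding y_def Dlt_def using int_aa by simp
    have "t * y = - ((1 - Dlt p n) * t)" unfolding yD by (simp add: algebra_simps)
    hence "t * y \<ge> - (2 * (1 - 2*c))" using key_ineq[OF True] by linarith
    thus ?thesis using c5_le(2) r(2) c_facts(1) by argo
  next
    case False
    hence "top \<le> \<lfloor>gam p n\<rfloor>" using top_le int_aa by simp
    hence "real_of_int top \<le> real_of_int \<lfloor>gam p n\<rfloor>" by (simp only: of_int_le_iff)
    hence "y \<ge> 0" unfolding y_def using fl_gam by linarith
    hence "t * y \<ge> 0" using t_pos by simp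
    thus ?thesis using c5_le(2) r(2) c_facts(1,2) by argo
  qed
  have y1: "c5 p eps + c/t - 2*(1-\<rho>)/t \<le> y"
  proof -
    have "(t * c5 p eps + c - 2*(1-\<rho>))/t \<le> y" using ty t_pos by (simp add: divide_le_eq mult.commute)
    moreover have "(t * c5 p eps + c - 2*(1-\<rho>))/t = c5 p eps + c/t - 2*(1-\<rho>)/t"
      using t_pos by (simp add: field_simps)
    ultimately show ?thesis by simp
  qed
  have "x*(c5 p eps + c/t - 2*(1-\<rho>)/t) \<le> x*y" using y1 x_pos by (intro mult_left_mono) auto
  hence "x * c5 p eps + c/t*x - 2*x*(1-\<rho>)/t \<le> x*y" by (simp add: algebra_simps)
  thus ?thesis unfolding y_def[symmetric] by (simp add: algebra_simps)
qed

lemma TT_eq: "TT p eps n \<rho> i = Tf \<rho> i (bb p) kv (aa p n) (real n)"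
  unfolding TT_def Tf_def kv_def ..

lemma TT_near_top:
  assumes r: "0 \<le> \<rho>" "\<rho> \<le> c" and i: "i \<le> aa p n" "aa p n \<le> i + 4"
  shows "TT p eps n \<rho> i \<le> exp (x*(1 - (gam p n - real i)) - 2*x*(1-\<rho>)/t + c/t*x)"
proof -
  define a where "a = aa p n"
  have a1: "1 \<le> a" using a_bounds unfolding a_def by simp
  have "TT p eps n \<rho> i \<le> exp (\<rho> * real i + ln (bb p) * (real i * (real i - 1) / 2) + 2 * ln (real n)
      + ln (fact a) + real (a - i) * ln (real a) - real i * ln (real n))"
    unfolding TT_eq a_def[symmetric]
    by (rule Tf_main) (use b_gt1 n r kv_bounds i a1 in \<open>auto simp: a_def\<close>)
  also have "\<dots> \<le> exp (x*(1 - (gam p n - real i)) - 2*x*(1-\<rho>)/t + c/t*x)"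
  proof (rule exp_mono)
    have lna: "ln (real a) \<le> lam" "0 \<le> ln (real a)"
    proof -
      have "real a \<le> 2*x/t" using a_bounds unfolding a_def by simp
      thus "ln (real a) \<le> lam" unfolding lam_def using a1 by simp
      show "0 \<le> ln (real a)" using a1 by simp
    qed
    have f: "ln (fact a) \<le> real a * ln (real a) - real a + ln (real a) + 1" using ln_fact_le a1 by simp
    have m: "real (a - i) = real a - real i" using i unfolding a_def by simp
    have m4: "real a - real i \<le> 4" "0 \<le> real a - real i" using i unfolding a_def by auto
    have "real a * ln (real a) \<le> real a * lam" using lna by (intro mult_left_mono) auto
    moreover have "(real a - real i) * ln (real a) \<le> (real a - real i) * lam"
      using lna m4 by (intro mult_left_mono) auto
    ultimately have E1: "\<rho> * real i + ln (bb p) * (real i * (real i - 1) / 2) + 2 * ln (real n)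
      + ln (fact a) + real (a - i) * ln (real a) - real i * ln (real n)
      \<le> \<rho> * real i + t * (real i * (real i - 1) / 2) + 2 * x + (real a + (real a - real i) + 1) * lam
         - real a + 1 - real i * x"
      using f lna unfolding m t_def[symmetric] x_def[symmetric] by (simp add: algebra_simps)
    have E2: "\<rho> * real i + t * (real i * (real i - 1) / 2) + 2 * x + (real a + (real a - real i) + 1) * lam
         - real a + 1 - real i * x
       \<le> x*(1-(gam p n - real i)) - 2*x*(1-\<rho>)/t + (lam*(14+4/t) + 2 + 10*t)"
      by (rule key_alg[where D = "Dlt p n"]) (use t_pos r c_facts m4 lam_nonneg Dlt_bounds in
           \<open>auto simp: gam_eq a_eq[folded a_def] field_simps\<close>)
    have E3: "lam*(14+4/t) + 2 + 10*t \<le> c/t * x" using H9 unfolding lam_def .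
    show "\<rho> * real i + ln (bb p) * (real i * (real i - 1) / 2) + 2 * ln (real n)
      + ln (fact a) + real (a - i) * ln (real a) - real i * ln (real n)
      \<le> x*(1 - (gam p n - real i)) - 2*x*(1-\<rho>)/t + c/t*x"
      using E1 E2 E3 by linarith
  qed
  finally show ?thesis .
qed

lemma npowr: "real n powr z = exp (z * x)" using n unfolding x_def by (simp add: powr_def)

lemma exp_tenth: "exp (-x/10) \<le> real n powr (- c5 p eps)"
  unfolding npowr using c5_le x_pos by (simp add: mult_right_mono)

lemma TT_gen_bound:
  assumes r: "0 \<le> \<rho>" "\<rho> \<le> c" and i: "i \<le> aa p n"
  shows "TT p eps n \<rho> i \<le> (real n)\<^sup>2 * (exp c * (real (aa p n))\<^sup>2 * exp (t * (real i - 1)/2) / real n) ^ i"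
proof -
  have "bb p powr ((real i - 1)/2) = exp (t * (real i - 1)/2)"
    using b_gt1 unfolding t_def powr_def by simp
  moreover have "TT p eps n \<rho> i \<le> (real n)\<^sup>2 * (exp c * (real (aa p n))\<^sup>2 * bb p powr ((real i - 1)/2) / real n) ^ i"
    unfolding TT_eq by (rule Tf_gen) (use b_gt1 n r kv_bounds i in auto)
  ultimately show ?thesis by simp
qed

definition Q where "Q = 2*x/t"
lemma Q_facts: "real (aa p n) \<le> Q" "0 \<le> Q" using a_bounds unfolding Q_def by auto

lemma TT_small:
  assumes r: "0 \<le> \<rho>" "\<rho> \<le> c" and i: "3 \<le> i" "i \<le> aa p n" and ti: "t * (real i - 1) \<le> x/2"
  shows "TT p eps n \<rho> i \<le> real n powr (- c5 p eps)"
proof -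
  define \<beta> where "\<beta> = exp c * (real (aa p n))\<^sup>2 * exp (t * (real i - 1)/2) / real n"
  define M where "M = exp c * Q\<^sup>2 * exp (-(3/4)*x)"
  have b0: "0 \<le> \<beta>" unfolding \<beta>_def by simp
  have bM: "\<beta> \<le> M"
  proof -
    have "exp (t * (real i - 1)/2) \<le> exp (x/4)" using ti by simp
    moreover have "(real (aa p n))\<^sup>2 \<le> Q\<^sup>2" using Q_facts by (intro power_mono) auto
    ultimately have "\<beta> \<le> exp c * Q\<^sup>2 * exp (x/4) / real n" unfolding \<beta>_def using n
      by (intro divide_right_mono mult_mono) auto
    also have "\<dots> = M" unfolding M_def n_exp by (simp add: exp_diff[symmetric] exp_add[symmetric] field_simps)
    finally show ?thesis .
  qed
  have M1: "M \<le> 1"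
  proof -
    have "M = exp c * Q\<^sup>2 / exp (3/4*x)" unfolding M_def by (simp add: exp_minus field_simps)
    thus ?thesis using H6 unfolding Q_def by simp
  qed
  have "TT p eps n \<rho> i \<le> (real n)\<^sup>2 * \<beta> ^ i" unfolding \<beta>_def by (rule TT_gen_bound[OF r i(2)])
  also have "\<dots> \<le> (real n)\<^sup>2 * \<beta> ^ 3"
    using b0 bM M1 i by (intro mult_left_mono power_decreasing) auto
  also have "\<dots> \<le> (real n)\<^sup>2 * M ^ 3" using b0 bM by (intro mult_left_mono power_mono) auto
  also have "\<dots> = exp (3*c) * Q^6 * exp (-x/4)"
  proof -
    have "(real n)\<^sup>2 = exp (2*x)" unfolding n_exp by (simp add: exp_double[symmetric])
    moreover have "M ^ 3 = exp (3*c) * Q^6 * exp (-(9/4)*x)"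
      unfolding M_def by (simp add: power_mult_distrib exp_of_nat_mult[symmetric] power_mult[symmetric])
    ultimately show ?thesis by (simp add: exp_add[symmetric] mult.assoc mult.left_commute)
  qed
  also have "\<dots> \<le> exp (3/20*x) * exp (-x/4)" using H5 unfolding Q_def by simp
  also have "\<dots> = exp (-x/10)" by (simp add: exp_add[symmetric])
  also have "\<dots> \<le> real n powr (- c5 p eps)" by (rule exp_tenth)
  finally show ?thesis .
qed

lemma TT_mid:
  assumes r: "0 \<le> \<rho>" "\<rho> \<le> c" and i: "i \<le> aa p n"
    and ti: "t * (real i - 1) > x/2" and ti2: "t * real i < x + ln (real (aa p n))"
  shows "TT p eps n \<rho> i \<le> real n powr (- c5 p eps)"
proof -
  define a where "a = real (aa p n)"
  have a1: "1 \<le> a" using a_bounds unfolding a_def by simp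
  define \<beta> where "\<beta> = exp c * a\<^sup>2 * exp (t * (real i - 1)/2) / real n"
  define M where "M = exp (-x/4)"
  have b0: "0 \<le> \<beta>" unfolding \<beta>_def by simp
  have bM: "\<beta> \<le> M"
  proof -
    have la: "ln a \<ge> 0" using a1 by simp
    have "t * (real i - 1) = t * real i - t" by (simp add: algebra_simps)
    hence "t * (real i - 1)/2 \<le> x/2 + ln a" using ti2 t_pos la unfolding a_def by linarith
    hence "exp (t * (real i - 1)/2) \<le> exp (x/2 + ln a)" by (simp only: exp_le_cancel_iff)
    also have "\<dots> = exp (x/2) * a" using a1 by (simp add: exp_add)
    finally have "exp (t * (real i - 1)/2) \<le> exp (x/2) * a" .
    hence "\<beta> \<le> exp c * a\<^sup>2 * (exp (x/2) * a) / real n" unfolding \<beta>_def using n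
      by (intro divide_right_mono mult_left_mono) auto
    also have "\<dots> = exp c * a^3 * exp (-x/2)" unfolding n_exp
      by (simp add: exp_minus field_simps power2_eq_square power3_eq_cube exp_double[symmetric] exp_add[symmetric])
    also have "\<dots> \<le> exp c * Q^3 * exp (-x/2)" using Q_facts a1 unfolding a_def
      by (intro mult_right_mono mult_left_mono power_mono) auto
    also have "\<dots> \<le> exp (1/4*x) * exp (-x/2)" using H7 unfolding Q_def by simp
    also have "\<dots> = M" unfolding M_def by (simp add: exp_add[symmetric])
    finally show ?thesis .
  qed
  have M1: "M \<le> 1" unfolding M_def using x_pos by simp
  have i11: "11 \<le> i"
  proof -
    have "x/2 \<ge> 10 * t" using H3 t_pos by (simp add: field_simps)
    hence "t * (real i - 1) > t * 10" using ti by simp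
    hence "real i - 1 > 10" using t_pos by simp
    thus ?thesis by simp
  qed
  have "TT p eps n \<rho> i \<le> (real n)\<^sup>2 * \<beta> ^ i" unfolding \<beta>_def a_def by (rule TT_gen_bound[OF r i])
  also have "\<dots> \<le> (real n)\<^sup>2 * M ^ i" using b0 bM by (intro mult_left_mono power_mono) auto
  also have "\<dots> \<le> (real n)\<^sup>2 * M ^ 11" using M1 i11 by (intro mult_left_mono power_decreasing) (auto simp: M_def)
  also have "\<dots> = exp (-(3/4)*x)"
  proof -
    have "(real n)\<^sup>2 = exp (2*x)" unfolding n_exp by (simp add: exp_double[symmetric])
    moreover have "M ^ 11 = exp (real 11 * (-x/4))" unfolding M_def by (rule exp_of_nat_mult[symmetric])
    ultimately show ?thesis by (simp add: exp_add[symmetric])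
  qed
  also have "\<dots> \<le> exp (-x/10)" using x_pos by simp
  also have "\<dots> \<le> real n powr (- c5 p eps)" by (rule exp_tenth)
  finally show ?thesis .
qed

lemma TT_two:
  assumes r: "0 \<le> \<rho>" "\<rho> \<le> c"
  shows "TT p eps n \<rho> 2 \<le> real n powr (1 - c5 p eps)"
proof -
  have i: "2 \<le> aa p n" using a_bounds by simp
  have "TT p eps n \<rho> 2 \<le> (real n)\<^sup>2 * (exp c * (real (aa p n))\<^sup>2 * exp (t * (real 2 - 1)/2) / real n) ^ 2"
    by (rule TT_gen_bound[OF r i])
  also have "\<dots> = exp (2*c) * (real (aa p n))^4 * bb p"
  proof -
    have "exp (t/2) ^ 2 = bb p" using b_gt1 unfolding t_def by (simp add: exp_double[symmetric])
    thus ?thesis using n by (simp add: power_mult_distrib power_divide exp_double[symmetric] field_simps)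
  qed
  also have "\<dots> \<le> exp (2*c) * Q^4 * bb p" using Q_facts b_gt1
    by (intro mult_right_mono mult_left_mono power_mono) auto
  also have "\<dots> \<le> exp (9/10*x)" using H8 unfolding Q_def by simp
  also have "\<dots> \<le> real n powr (1 - c5 p eps)" unfolding npowr using c5_le x_pos
    by (simp add: mult_right_mono)
  finally show ?thesis .
qed

lemma TT_nonneg: "0 \<le> TT p eps n \<rho> i" unfolding TT_def using b_gt1 by simp

lemma TT_step:
  assumes r: "0 \<le> \<rho>" and j: "j < aa p n" and tj: "t * real j \<ge> x + ln (real (aa p n))"
  shows "TT p eps n \<rho> j \<le> TT p eps n \<rho> (Suc j)"
proof -
  define a where "a = aa p n"
  have a1: "1 \<le> real a" using a_bounds unfolding a_def by simp
  define R where "R = exp \<rho> * bb p ^ j * (real (a - j))\<^sup>2 / (real n * (real j + 1))"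
  have eq: "TT p eps n \<rho> (Suc j) = TT p eps n \<rho> j * R"
    unfolding TT_eq R_def a_def by (rule Tf_ratio) (use j n b_gt1 in auto)
  have R1: "R \<ge> 1"
  proof -
    have "exp (real j * t) = exp t ^ j" by (rule exp_of_nat_mult)
    moreover have "exp t = bb p" using b_gt1 unfolding t_def by simp
    ultimately have bj: "bb p ^ j = exp (t * real j)" by (simp add: mult.commute)
    have "exp (x + ln (real a)) \<le> exp (t * real j)" using tj unfolding a_def by simp
    hence "real n * real a \<le> bb p ^ j" unfolding bj n_exp using a1 by (simp add: exp_add)
    moreover have "real j + 1 \<le> real a" using j unfolding a_def by simp
    ultimately have h1: "real n * (real j + 1) \<le> bb p ^ j"
      by (smt (verit) mult_left_mono of_nat_0_le_iff)
    have h2: "1 \<le> exp \<rho> * (real (a - j))\<^sup>2"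
    proof -
      have "1 \<le> real (a - j)" using j unfolding a_def by simp
      hence "1 \<le> (real (a - j))\<^sup>2" by (simp add: one_le_power)
      moreover have "1 \<le> exp \<rho>" using r by simp
      ultimately show ?thesis by (metis mult_mono' one_le_mult_iff zero_le_one mult_1)
    qed
    have pos: "real n * (real j + 1) > 0" using n by simp
    have "real n * (real j + 1) \<le> exp \<rho> * (real (a - j))\<^sup>2 * bb p ^ j"
      using h1 h2 by (smt (verit) b_gt1 mult_le_cancel_right1 zero_le_power)
    thus ?thesis unfolding R_def using pos by (simp add: field_simps)
  qed
  show ?thesis unfolding eq using R1 TT_nonneg[of \<rho> j] by (simp add: mult_le_cancel_left1)
qed

lemma top_pos: "top \<ge> 18" using top_ge a_bounds by linarith

lemma TT_top:
  assumes r: "0 \<le> \<rho>" "\<rho> \<le> c"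
  shows "TT p eps n \<rho> (nat top) \<le> real n powr (1 - c5 p eps)"
proof -
  have T: "real (nat top) = real_of_int top" using top_pos by simp
  have i: "nat top \<le> aa p n" "aa p n \<le> nat top + 4" using top_le top_ge top_pos by linarith+
  have "TT p eps n \<rho> (nat top) \<le> exp (x*(1 - (gam p n - real (nat top))) - 2*x*(1-\<rho>)/t + c/t*x)"
    by (rule TT_near_top[OF r i])
  also have "\<dots> \<le> exp ((1 - c5 p eps) * x)" unfolding T using expo_cond[OF r] by (simp add: algebra_simps)
  also have "\<dots> = real n powr (1 - c5 p eps)" by (simp add: npowr)
  finally show ?thesis .
qed

lemma TT_top1:
  assumes r: "0 \<le> \<rho>" "\<rho> \<le> c"
  shows "TT p eps n \<rho> (nat (top - 1)) \<le> real n powr (- c5 p eps)"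
proof -
  have T: "real (nat (top - 1)) = real_of_int top - 1" using top_pos by simp
  have i: "nat (top - 1) \<le> aa p n" "aa p n \<le> nat (top - 1) + 4" using top_le top_ge top_pos by linarith+
  have "TT p eps n \<rho> (nat (top - 1)) \<le> exp (x*(1 - (gam p n - real (nat (top - 1)))) - 2*x*(1-\<rho>)/t + c/t*x)"
    by (rule TT_near_top[OF r i])
  also have "\<dots> \<le> exp ((- c5 p eps) * x)"
  proof -
    have "x*(1 - (gam p n - (real_of_int top - 1))) = x*(1 - (gam p n - real_of_int top)) - x"
      by (simp add: algebra_simps)
    thus ?thesis unfolding T using expo_cond[OF r] by (simp add: algebra_simps)
  qed
  also have "\<dots> = real n powr (- c5 p eps)" by (simp add: npowr)
  finally show ?thesis .
qed

lemma TT_range: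
  assumes r: "0 \<le> \<rho>" "\<rho> \<le> c" and i: "3 \<le> i" "int i \<le> top - 1"
  shows "TT p eps n \<rho> i \<le> real n powr (- c5 p eps)"
proof -
  have ia: "i \<le> aa p n" using i top_le by linarith
  show ?thesis
  proof (cases "t * real i \<ge> x + ln (real (aa p n))")
    case True
    have chain: "\<forall>d. int (i + d) \<le> top - 1 \<longrightarrow> TT p eps n \<rho> i \<le> TT p eps n \<rho> (i + d)"
    proof
      fix d show "int (i + d) \<le> top - 1 \<longrightarrow> TT p eps n \<rho> i \<le> TT p eps n \<rho> (i + d)"
      proof (induction d)
        case 0 thus ?case by simp
      next
        case (Suc d)
        show ?case
        proof
          assume h: "int (i + Suc d) \<le> top - 1"
          hence IH: "TT p eps n \<rho> i \<le> TT p eps n \<rho> (i + d)" using Suc.IH by simp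
          have j: "i + d < aa p n" using h top_le by linarith
          have "t * real i \<le> t * real (i + d)" using t_pos by simp
          hence tj: "t * real (i + d) \<ge> x + ln (real (aa p n))" using True by linarith
          have "TT p eps n \<rho> (i + d) \<le> TT p eps n \<rho> (Suc (i + d))" by (rule TT_step[OF r(1) j tj])
          thus "TT p eps n \<rho> i \<le> TT p eps n \<rho> (i + Suc d)" using IH by simp
        qed
      qed
    qed
    have "i + (nat (top - 1) - i) = nat (top - 1)" using i by linarith
    moreover have "int (nat (top - 1)) \<le> top - 1" using top_pos by simp
    ultimately have "TT p eps n \<rho> i \<le> TT p eps n \<rho> (nat (top - 1))"
      using chain[rule_format, of "nat (top - 1) - i"] by simp
    also have "\<dots> \<le> real n powr (- c5 p eps)" by (rule TT_top1[OF r])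
    finally show ?thesis .
  next
    case False
    show ?thesis
    proof (cases "t * (real i - 1) \<le> x/2")
      case True thus ?thesis using TT_small[OF r i(1) ia] by simp
    next
      case F2: False
      show ?thesis by (rule TT_mid[OF r ia]) (use False F2 in auto)
    qed
  qed
qed

lemma final_n:
  "\<forall>\<rho>. 0 \<le> \<rho> \<and> \<rho> \<le> cc eps \<longrightarrow>
           (\<forall>i::nat. 3 \<le> i \<and> int i \<le> \<lceil>real n / real_of_int (kk p eps n)\<rceil> - 1 \<longrightarrow>
               TT p eps n \<rho> i \<le> real n powr (- c5 p eps)) \<and>
           (\<forall>i::nat. (i = 2 \<or> int i = \<lceil>real n / real_of_int (kk p eps n)\<rceil>) \<longrightarrow>
               TT p eps n \<rho> i \<le> real n powr (1 - c5 p eps))"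
proof (intro allI impI conjI)
  fix \<rho> i assume r: "0 \<le> \<rho> \<and> \<rho> \<le> cc eps"
  hence r': "0 \<le> \<rho>" "\<rho> \<le> c" using c_def by auto
  {
    assume "3 \<le> i \<and> int i \<le> \<lceil>real n / real_of_int (kk p eps n)\<rceil> - 1"
    thus "TT p eps n \<rho> i \<le> real n powr (- c5 p eps)"
      using TT_range[OF r'] unfolding top_def kv_def by auto
  }
  {
    assume "i = 2 \<or> int i = \<lceil>real n / real_of_int (kk p eps n)\<rceil>"
    thus "TT p eps n \<rho> i \<le> real n powr (1 - c5 p eps)"
    proof
      assume "i = 2" thus ?thesis using TT_two[OF r'] by simp
    next
      assume "int i = \<lceil>real n / real_of_int (kk p eps n)\<rceil>"
      hence "i = nat top" unfolding top_def kv_def by simp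
      thus ?thesis using TT_top[OF r'] by simp
    qed
  }
qed

end

lemma ev_lin:
  fixes t :: real assumes t: "t > 0" and r: "r > 0"
  shows "eventually (\<lambda>x. 2*x/t \<le> exp (r*x)) at_top"
  using ev_poly_exp[OF r, of 1 "2/t" 1] by eventually_elim simp

lemma ev_H:
  fixes t c bp :: real assumes t: "t > 0" and c: "c > 0" and bp: "bp > 0"
  shows "eventually (\<lambda>x. 1 \<le> 2*x/t \<and> t \<le> 2*ln(2*x/t) \<and> ln(2*x/t) \<le> x/2 \<and> 20 \<le> x/t
     \<and> (2*x/t)^2 < exp x
     \<and> exp(3*c)*(2*x/t)^6 \<le> exp(3/20*x)
     \<and> exp c*(2*x/t)^2 \<le> exp(3/4*x)
     \<and> exp c*(2*x/t)^3 \<le> exp(1/4*x)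
     \<and> exp(2*c)*(2*x/t)^4 * bp \<le> exp(9/10*x)
     \<and> ln(2*x/t)*(14+4/t) + 2 + 10*t \<le> c/t * x) at_top"
proof -
  define K where "K = 14 + 4/t"
  have K: "K > 0" unfolding K_def using t by (simp add: add_pos_pos)
  define \<eta> where "\<eta> = c / (2*t*K)"
  have eta: "\<eta> > 0" unfolding \<eta>_def using t c K by simp
  have e1: "eventually (\<lambda>x::real. x \<ge> max (max (t/2) (t * exp (t/2) / 2)) (max (20*t) (max 1 (2*t*(2+10*t)/c)))) at_top"
    by (rule eventually_ge_at_top)
  have e2: "eventually (\<lambda>x. 2*x/t \<le> exp (1/2*x)) at_top" by (rule ev_lin[OF t]) simp
  have e3: "eventually (\<lambda>x. 1 * ((2/t)*x)^2 \<le> exp (1/2*x)) at_top" by (rule ev_poly_exp) simp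
  have e5: "eventually (\<lambda>x. exp(3*c) * ((2/t)*x)^6 \<le> exp (3/20*x)) at_top" by (rule ev_poly_exp) simp
  have e6: "eventually (\<lambda>x. exp c * ((2/t)*x)^2 \<le> exp (3/4*x)) at_top" by (rule ev_poly_exp) simp
  have e7: "eventually (\<lambda>x. exp c * ((2/t)*x)^3 \<le> exp (1/4*x)) at_top" by (rule ev_poly_exp) simp
  have e8: "eventually (\<lambda>x. (exp(2*c)*bp) * ((2/t)*x)^4 \<le> exp (9/10*x)) at_top" by (rule ev_poly_exp) simp
  have e9: "eventually (\<lambda>x. 2*x/t \<le> exp (\<eta>*x)) at_top" by (rule ev_lin[OF t eta])
  show ?thesis using e1 e2 e3 e5 e6 e7 e8 e9
  proof eventually_elim
    case (elim x)
    have x1: "x \<ge> t/2" "x \<ge> t * exp (t/2) / 2" "x \<ge> 20*t" "x \<ge> 1" "x \<ge> 2*t*(2+10*t)/c"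
      using elim(1) by auto
    have xp: "x > 0" using x1 by simp
    have q: "2*x/t = (2/t)*x" by simp
    have A1: "1 \<le> 2*x/t" using x1(1) t by (simp add: field_simps)
    have qpos: "2*x/t > 0" using xp t by simp
    have A2: "t \<le> 2*ln(2*x/t)"
    proof -
      have "exp (t/2) \<le> 2*x/t" using x1(2) t by (simp add: field_simps)
      hence "ln (exp (t/2)) \<le> ln (2*x/t)" using qpos by (subst ln_le_cancel_iff) auto
      thus ?thesis by simp
    qed
    have A3: "ln(2*x/t) \<le> x/2"
    proof -
      have "ln (2*x/t) \<le> ln (exp (1/2*x))" using elim(2) qpos by (subst ln_le_cancel_iff) auto
      thus ?thesis by simp
    qed
    have A4: "20 \<le> x/t" using x1(3) t by (simp add: field_simps)
    have A5: "(2*x/t)^2 < exp x"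
    proof -
      have "(2*x/t)^2 \<le> exp (1/2*x)" using elim(3) unfolding q by simp
      also have "\<dots> < exp x" using xp by simp
      finally show ?thesis .
    qed
    have A9: "ln(2*x/t)*(14+4/t) + 2 + 10*t \<le> c/t * x"
    proof -
      have "ln (2*x/t) \<le> ln (exp (\<eta>*x))" using elim(8) qpos by (subst ln_le_cancel_iff) auto
      hence "ln (2*x/t) \<le> \<eta>*x" by simp
      hence "ln (2*x/t) * K \<le> \<eta>*x*K" using K by (simp add: mult_right_mono)
      also have "\<eta>*x*K = c/(2*t) * x" unfolding \<eta>_def using K t by (simp add: field_simps)
      finally have h1: "ln (2*x/t) * K \<le> c/(2*t) * x" .
      have "2*t*(2+10*t) \<le> c * x" using x1(5) c by (simp add: field_simps)
      hence h2: "2 + 10*t \<le> c/(2*t) * x" using t by (simp add: field_simps)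
      have "c/(2*t) * x + c/(2*t) * x = c/t*x" by (simp add: field_simps)
      thus ?thesis using h1 h2 unfolding K_def by linarith
    qed
    show ?case using A1 A2 A3 A4 A5 A9 elim(4-7) unfolding q by (simp add: mult.commute mult.left_commute)
  qed
qed

theorem lemma10:
  fixes p eps :: real
  assumes "0 < p" "p < 1" "0 < eps" "eps < 1"
  shows "\<forall>\<^sub>F n in sequentially. \<forall>\<rho>. 0 \<le> \<rho> \<and> \<rho> \<le> cc eps \<longrightarrow>
           (\<forall>i::nat. 3 \<le> i \<and> int i \<le> \<lceil>real n / real_of_int (kk p eps n)\<rceil> - 1 \<longrightarrow>
               TT p eps n \<rho> i \<le> real n powr (- c5 p eps)) \<and>
           (\<forall>i::nat. (i = 2 \<or> int i = \<lceil>real n / real_of_int (kk p eps n)\<rceil>) \<longrightarrow>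
               TT p eps n \<rho> i \<le> real n powr (1 - c5 p eps))"
proof -
  define t where "t = ln (bb p)"
  define c where "c = cc eps"
  have t: "t > 0" unfolding t_def using bb_facts assms by simp
  have c: "c > 0" unfolding c_def using cc_facts assms by simp
  have bp: "bb p > 0" using bb_facts(1)[OF assms(1,2)] by simp
  have lim: "filterlim (\<lambda>n::nat. ln (real n)) at_top sequentially"
    by (rule filterlim_compose[OF ln_at_top filterlim_real_sequentially])
  have ev: "eventually (\<lambda>n::nat. let x = ln (real n) in 1 \<le> 2*x/t \<and> t \<le> 2*ln(2*x/t) \<and> ln(2*x/t) \<le> x/2 \<and> 20 \<le> x/t
     \<and> (2*x/t)^2 < exp x
     \<and> exp(3*c)*(2*x/t)^6 \<le> exp(3/20*x)
     \<and> exp c*(2*x/t)^2 \<le> exp(3/4*x)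
     \<and> exp c*(2*x/t)^3 \<le> exp(1/4*x)
     \<and> exp(2*c)*(2*x/t)^4 * bb p \<le> exp(9/10*x)
     \<and> ln(2*x/t)*(14+4/t) + 2 + 10*t \<le> c/t * x) sequentially"
    unfolding Let_def by (rule eventually_compose_filterlim[OF ev_H[OF t c bp] lim])
  moreover have "eventually (\<lambda>n::nat. n > 0) sequentially" by (rule eventually_gt_at_top)
  ultimately show ?thesis
  proof eventually_elim
    case (elim n)
    have ne: "exp (ln (real n)) = real n" using elim(2) by simp
    interpret pn p eps n t "ln (real n)" c
      using elim assms unfolding Let_def ne
      by unfold_locales (auto simp: t_def c_def)
    show ?case by (rule final_n)
  qed
qed


end
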